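(* If a quadrilateral $q$ is $\frac{\pi}{12}$-near square and has a right angle adjacent to an acute angle, then $q$ has a periodic billiard path.
   Context: A quadrilateral is cut by a diagonal into two triangles. Its parameters $(a_1,a_2,a_3,a_4)$ are the four angles that the diagonal makes with the four sides (the angles of the two triangles at the endpoints of the diagonal). For $\varepsilon>0$, the quadrilateral is $\varepsilon$-near square if $|a_i-\pi/4|<\varepsilon$ for all $i$. A billiard path is a straight-line trajectory inside the polygon that reflects off the sides with angle of incidence equal to angle of reflection. Trajectories hitting vertices are excluded. It is periodic if it repeats itself. *)

theory Defs
  imports "HOL-Analysis.Analysis"
begin

text \<open>Points of the Euclidean plane are modelled as complex numbers.
  A quadrilateral is given by its four vertices A B C D in cyclic order,
  cut by the diagonal AC into the triangles ABC and ACD.\<close>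

definition vang :: "complex \<Rightarrow> complex \<Rightarrow> real" where
  "vang u v = arccos ((u \<bullet> v) / (norm u * norm v))"

definition cross :: "complex \<Rightarrow> complex \<Rightarrow> real" where
  "cross u v = Im (cnj u * v)"

text \<open>A B C D is a quadrilateral cut by the diagonal AC into two (nondegenerate)
  triangles: B and D lie strictly on opposite sides of the line AC.\<close>
definition quadrilateral :: "complex \<Rightarrow> complex \<Rightarrow> complex \<Rightarrow> complex \<Rightarrow> bool" where
  "quadrilateral A B C D \<longleftrightarrow> cross (C - A) (B - A) * cross (C - A) (D - A) < 0"

text \<open>The four parameters: angles of the triangles ABC and ACD at the
  endpoints A, C of the diagonal, i.e. the angles the diagonal makes with the
  sides AB, CB, CD, AD.\<close>
definition quad_params :: "complex \<Rightarrow> complex \<Rightarrow> complex \<Rightarrow> complex \<Rightarrow> real list" where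
  "quad_params A B C D =
     [vang (B - A) (C - A), vang (B - C) (A - C), vang (D - C) (A - C), vang (D - A) (C - A)]"

definition near_square :: "real \<Rightarrow> complex \<Rightarrow> complex \<Rightarrow> complex \<Rightarrow> complex \<Rightarrow> bool" where
  "near_square \<epsilon> A B C D \<longleftrightarrow> (\<forall>a \<in> set (quad_params A B C D). \<bar>a - pi / 4\<bar> < \<epsilon>)"

text \<open>Interior angles at A, B, C, D (in cyclic order). At the endpoints of the
  diagonal the interior angle is the sum of the two triangle angles.\<close>
definition interior_angles :: "complex \<Rightarrow> complex \<Rightarrow> complex \<Rightarrow> complex \<Rightarrow> real list" where
  "interior_angles A B C D =
     [vang (B - A) (C - A) + vang (D - A) (C - A),
      vang (A - B) (C - B),
      vang (B - C) (A - C) + vang (D - C) (A - C),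
      vang (A - D) (C - D)]"

definition right_adj_acute :: "complex \<Rightarrow> complex \<Rightarrow> complex \<Rightarrow> complex \<Rightarrow> bool" where
  "right_adj_acute A B C D \<longleftrightarrow>
     (\<exists>i < 4. let x = interior_angles A B C D ! i;
                  y = interior_angles A B C D ! ((i + 1) mod 4)
              in (x = pi / 2 \<and> y < pi / 2) \<or> (y = pi / 2 \<and> x < pi / 2))"

definition quad_region :: "complex \<Rightarrow> complex \<Rightarrow> complex \<Rightarrow> complex \<Rightarrow> complex set" where
  "quad_region A B C D = convex hull {A, B, C} \<union> convex hull {A, C, D}"

definition quad_sides :: "complex \<Rightarrow> complex \<Rightarrow> complex \<Rightarrow> complex \<Rightarrow> (complex \<times> complex) set" where
  "quad_sides A B C D = {(A, B), (B, C), (C, D), (D, A)}"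

definition reflect_dir :: "complex \<Rightarrow> complex \<Rightarrow> complex" where
  "reflect_dir s v = (2 * (v \<bullet> s) / (s \<bullet> s)) *\<^sub>R s - v"

text \<open>A periodic billiard path: a periodic sequence of bounce points p i, each in
  the relative interior of a side (so no vertex is hit), consecutive points joined
  by straight segments running through the interior of the quadrilateral, and at
  each bounce the angle of incidence equals the angle of reflection (the outgoing
  unit direction is the mirror image of the incoming one in the side).\<close>
definition has_periodic_billiard_path :: "complex \<Rightarrow> complex \<Rightarrow> complex \<Rightarrow> complex \<Rightarrow> bool" where
  "has_periodic_billiard_path A B C D \<longleftrightarrow>
     (\<exists>(p :: nat \<Rightarrow> complex) (n :: nat). n > 0 \<and>
        (\<forall>i. p (i + n) = p i) \<and>
        (\<forall>i. p i \<noteq> p (Suc i)) \<and>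
        (\<forall>i. open_segment (p i) (p (Suc i)) \<subseteq> interior (quad_region A B C D)) \<and>
        (\<forall>i. \<exists>(X, Y) \<in> quad_sides A B C D.
              p (Suc i) \<in> open_segment X Y \<and>
              (p (Suc (Suc i)) - p (Suc i)) /\<^sub>R norm (p (Suc (Suc i)) - p (Suc i)) =
                reflect_dir (Y - X) ((p (Suc i) - p i) /\<^sub>R norm (p (Suc i) - p i))))"

end

theory Submission
  imports Defs
begin


lemma reflect_dir_scale: "reflect_dir s (c *\<^sub>R v) = c *\<^sub>R reflect_dir s v"
  by (simp add: reflect_dir_def algebra_simps)

lemma reflect_dir_neg: "reflect_dir (- s) v = reflect_dir s v"
  by (simp add: reflect_dir_def)

lemma norm_reflect_dir: assumes "s \<noteq> 0" shows "norm (reflect_dir s v) = norm v"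
proof -
  have ss: "s \<bullet> s > 0" using assms by simp
  have "(norm (reflect_dir s v))\<^sup>2 = (norm v)\<^sup>2"
    unfolding reflect_dir_def power2_norm_eq_inner
    using ss by (simp add: inner_diff_left inner_diff_right inner_commute power2_eq_square field_simps)
  thus ?thesis by (simp add: power2_eq_iff_nonneg)
qed

lemma unit_reflect:
  assumes "s \<noteq> 0" "0 < l" "w = l *\<^sub>R reflect_dir s v"
  shows "w /\<^sub>R norm w = reflect_dir s (v /\<^sub>R norm v)"
proof -
  have "norm w = l * norm v" using assms norm_reflect_dir[OF assms(1)] by simp
  thus ?thesis using assms by (simp add: reflect_dir_scale divide_inverse_commute)
qed



definition pbp :: "complex set \<Rightarrow> (complex \<times> complex) set \<Rightarrow> bool" where
  "pbp S sides \<longleftrightarrow>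
     (\<exists>(p :: nat \<Rightarrow> complex) (n :: nat). n > 0 \<and>
        (\<forall>i. p (i + n) = p i) \<and>
        (\<forall>i. p i \<noteq> p (Suc i)) \<and>
        (\<forall>i. open_segment (p i) (p (Suc i)) \<subseteq> interior S) \<and>
        (\<forall>i. \<exists>(X, Y) \<in> sides.
              p (Suc i) \<in> open_segment X Y \<and>
              (p (Suc (Suc i)) - p (Suc i)) /\<^sub>R norm (p (Suc (Suc i)) - p (Suc i)) =
                reflect_dir (Y - X) ((p (Suc i) - p i) /\<^sub>R norm (p (Suc i) - p i))))"

definition cr :: "complex \<Rightarrow> complex \<Rightarrow> complex \<Rightarrow> real" where
  "cr P Q V = cross (Q - P) (V - P)"

definition sconv :: "complex \<Rightarrow> complex \<Rightarrow> complex \<Rightarrow> complex \<Rightarrow> bool" where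
  "sconv X Y Z W \<longleftrightarrow> cr X Y Z > 0 \<and> cr X Y W > 0 \<and> cr Y Z W > 0 \<and> cr Y Z X > 0 \<and>
      cr Z W X > 0 \<and> cr Z W Y > 0 \<and> cr W X Y > 0 \<and> cr W X Z > 0"

definition oquad :: "complex \<Rightarrow> complex \<Rightarrow> complex \<Rightarrow> complex \<Rightarrow> complex set" where
  "oquad X Y Z W = {p. cr X Y p > 0 \<and> cr Y Z p > 0 \<and> cr Z W p > 0 \<and> cr W X p > 0}"

lemma cr_comb: "cr A B ((1 - u) *\<^sub>R p + u *\<^sub>R q) = (1 - u) * cr A B p + u * cr A B q"
  by (simp add: cr_def cross_def algebra_simps)

lemma cr_self1 [simp]: "cr A B A = 0" and cr_self2 [simp]: "cr A B B = 0"
  by (simp_all add: cr_def cross_def algebra_simps)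

lemma pos_comb: "0 < (u::real) \<Longrightarrow> u < 1 \<Longrightarrow> 0 \<le> a \<Longrightarrow> 0 \<le> b \<Longrightarrow> 0 < a + b \<Longrightarrow> 0 < (1 - u) * a + u * b"
proof (cases "a > 0")
  case True
  assume "0 < u" "u < 1" "0 \<le> b"
  moreover have "0 < (1 - u) * a" using True \<open>u < 1\<close> by (intro mult_pos_pos) auto
  moreover have "0 \<le> u * b" using \<open>0 < u\<close> \<open>0 \<le> b\<close> by simp
  ultimately show ?thesis by linarith
next
  case False
  assume "0 < u" "u < 1" "0 \<le> a" "0 < a + b"
  then have "a = 0" "b > 0" using False by auto
  then show ?thesis using \<open>0 < u\<close> by simp
qed

lemma seg_oquad:
  assumes "p \<noteq> q"
    and "0 \<le> cr X Y p" "0 \<le> cr X Y q" "0 < cr X Y p + cr X Y q"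
    and "0 \<le> cr Y Z p" "0 \<le> cr Y Z q" "0 < cr Y Z p + cr Y Z q"
    and "0 \<le> cr Z W p" "0 \<le> cr Z W q" "0 < cr Z W p + cr Z W q"
    and "0 \<le> cr W X p" "0 \<le> cr W X q" "0 < cr W X p + cr W X q"
  shows "open_segment p q \<subseteq> oquad X Y Z W"
proof
  fix x assume "x \<in> open_segment p q"
  then obtain u where u: "0 < u" "u < 1" "x = (1 - u) *\<^sub>R p + u *\<^sub>R q"
    by (auto simp: in_segment)
  show "x \<in> oquad X Y Z W"
    unfolding oquad_def u(3) using assms u(1,2) by (simp add: cr_comb pos_comb)
qed

lemma cont_cr: "continuous_on UNIV (cr A B)"
  unfolding cr_def cross_def by (intro continuous_intros)

lemma open_oquad: "open (oquad X Y Z W)"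
proof -
  have "oquad X Y Z W = {p. 0 < cr X Y p} \<inter> {p. 0 < cr Y Z p} \<inter> {p. 0 < cr Z W p} \<inter> {p. 0 < cr W X p}"
    by (auto simp: oquad_def)
  moreover have "open {p. 0 < cr A B p}" for A B
    by (rule open_Collect_less) (auto intro: cont_cr continuous_intros)
  ultimately show ?thesis by (auto intro!: open_Int)
qed

lemma oquad_interior: "oquad X Y Z W \<subseteq> S \<Longrightarrow> oquad X Y Z W \<subseteq> interior S"
  by (simp add: interior_maximal open_oquad)



lemma reflect_dir_real: "reflect_dir 1 v = cnj v"
  by (simp add: reflect_dir_def inner_complex_def complex_eq_iff)

lemma reflect_dir_imag: "Re W = 0 \<Longrightarrow> Im W \<noteq> 0 \<Longrightarrow> reflect_dir (- W) v = - cnj v"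
  by (simp add: reflect_dir_def inner_complex_def complex_eq_iff power2_eq_square)

lemma reflect_dir_perp: "v \<bullet> s = 0 \<Longrightarrow> reflect_dir s v = - v"
  by (simp add: reflect_dir_def)

lemma reflect_dir_invol: "s \<noteq> 0 \<Longrightarrow> reflect_dir s (reflect_dir s v) = v"
  by (simp add: reflect_dir_def inner_diff_left inner_scaleR_left algebra_simps)

lemma refl_back:
  assumes "s \<noteq> 0" "0 < l" "w = l *\<^sub>R reflect_dir s v"
  shows "- v = (1 / l) *\<^sub>R reflect_dir s (- w)"
proof -
  have "reflect_dir s (- w) = - l *\<^sub>R v"
    using assms reflect_dir_scale[of s "-1" w] reflect_dir_scale[of s l] reflect_dir_invol[OF assms(1)]
    by simp
  thus ?thesis using assms(2) by simp
qed

lemma pos_comb2: "0 < (u::real) \<Longrightarrow> u < 1 \<Longrightarrow> 0 < a \<Longrightarrow> 0 < b \<Longrightarrow> 0 < (1 - u) * a + u * b"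
  by (rule pos_comb) auto

lemma core_frame:
  fixes Z W :: complex
  assumes sc: "sconv 0 1 Z W" and h1: "Re W = 0" and h2: "Re Z < 1"
    and h3: "(Re Z - 1) * Re Z + (Im Z)\<^sup>2 > 0" and hS: "oquad 0 1 Z W \<subseteq> S"
  shows "pbp S {(0,1),(1,Z),(W,0)}"
proof -
  define t where "t = 1 - Re Z"
  define h where "h = Im Z"
  define a where "a = Im W"
  have Zc: "Z = Complex (1 - t) h" by (simp add: t_def h_def complex_eq_iff)
  have Wc: "W = Complex 0 a" by (simp add: a_def h1 complex_eq_iff)
  have sc': "cr 0 1 Z > 0" "cr 0 1 W > 0" "cr 1 Z W > 0" "cr 1 Z 0 > 0"
      "cr Z W 0 > 0" "cr Z W 1 > 0" "cr W 0 1 > 0" "cr W 0 Z > 0"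
    using sc unfolding sconv_def by auto
  have hpos: "h > 0" using sc'(1) by (simp add: cr_def cross_def h_def)
  have apos: "a > 0" using sc'(2) by (simp add: cr_def cross_def a_def)
  have tpos: "t > 0" using h2 by (simp add: t_def)
  have tlt: "t < 1" using sc'(8) apos by (simp add: cr_def cross_def t_def Wc zero_less_mult_iff)
  have L: "t < t\<^sup>2 + h\<^sup>2" using h3 by (simp add: t_def h_def power2_eq_square algebra_simps)
  define L where "L = t\<^sup>2 + h\<^sup>2"
  define s0 where "s0 = t / L"
  have Lpos: "L > 0" using hpos by (simp add: add_nonneg_pos L_def)
  have s0pos: "s0 > 0" using tpos Lpos by (simp add: s0_def)
  have s0lt: "s0 < 1" using L Lpos by (simp add: s0_def L_def)
  obtain k where k: "max 0 (max (2 - L / t) (1 - a * h / t)) < k" "k < 1"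
  proof -
    have "max 0 (max (2 - L / t) (1 - a * h / t)) < 1"
      using L tpos apos hpos by (auto simp: field_simps L_def)
    thus ?thesis using dense that by blast
  qed
  have k0: "0 < k" and k1: "(2 - k) * s0 < 1" and k2: "(1 - k) * t / (h * a) < 1"
    using k tpos Lpos apos hpos by (auto simp: s0_def field_simps)
  define sP where "sP = k * s0"
  define sP2 where "sP2 = (2 - k) * s0"
  define sQ where "sQ = 1 - k"
  define sR where "sR = 1 - (1 - k) * t / (h * a)"
  have sPb: "0 < sP" "sP < 1" using k0 k(2) s0pos s0lt
    by (auto simp: sP_def mult_pos_pos) (smt (verit) mult_less_cancel_right2)
  have sP2b: "0 < sP2" "sP2 < 1" using k1 k(2) s0pos by (auto simp: sP2_def)
  have sQb: "0 < sQ" "sQ < 1" using k0 k(2) by (auto simp: sQ_def)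
  have sRb: "0 < sR" "sR < 1" using k2 k(2) tpos hpos apos by (auto simp: sR_def)
  define P where "P = (1 - sP) *\<^sub>R 1 + sP *\<^sub>R Z"
  define P2 where "P2 = (1 - sP2) *\<^sub>R 1 + sP2 *\<^sub>R Z"
  define Q where "Q = (1 - sQ) *\<^sub>R 0 + sQ *\<^sub>R (1::complex)"
  define R where "R = (1 - sR) *\<^sub>R W + sR *\<^sub>R (0::complex)"
  have Pc: "P = Complex (1 - k * s0 * t) (k * s0 * h)"
    by (simp add: P_def sP_def Zc complex_eq_iff algebra_simps)
  have P2c: "P2 = Complex (1 - (2 - k) * s0 * t) ((2 - k) * s0 * h)"
    by (simp add: P2_def sP2_def Zc complex_eq_iff algebra_simps)
  have Qc: "Q = Complex (1 - k) 0"
    by (simp add: Q_def sQ_def complex_eq_iff)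
  have Rc: "R = Complex 0 ((1 - k) * t / h)"
    using apos hpos by (simp add: R_def sR_def Wc complex_eq_iff)
  have m: "1 - (2 - k) * s0 * t > 0"
  proof -
    have "(2 - k) * s0 * t < 1 * 1" using k1 tlt tpos sP2b(1) sP2_def
      by (intro mult_strict_mono) auto
    thus ?thesis by simp
  qed
  have Wne: "Im W \<noteq> 0" using apos a_def by simp
  have r1: "R - Q = ((1 - k) * L / (k * h\<^sup>2)) *\<^sub>R reflect_dir (1 - 0) (Q - P)"
  proof -
    have "L \<noteq> 0" "h \<noteq> 0" "k \<noteq> 0" using Lpos hpos k0 by auto
    then show ?thesis unfolding reflect_dir_real diff_zero
      by (simp add: Pc Qc Rc complex_eq_iff s0_def field_simps) (simp add: L_def, algebra)
  qed
  have r2: "P2 - R = ((1 - (2 - k) * s0 * t) / (1 - k)) *\<^sub>R reflect_dir (0 - W) (R - Q)"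
    using k0 k(2) hpos Lpos m unfolding reflect_dir_imag[OF h1 Wne] diff_0
    by (simp add: P2c Qc Rc complex_eq_iff s0_def field_simps) (simp add: L_def, algebra)
  have o1: "(P2 - R) \<bullet> (Z - 1) = 0"
    using k0 k(2) hpos Lpos
    by (simp add: P2c Zc Rc inner_complex_def s0_def field_simps) (simp add: L_def, algebra)
  have o2: "(P - Q) \<bullet> (Z - 1) = 0"
    using k0 k(2) hpos Lpos
    by (simp add: Pc Zc Qc inner_complex_def s0_def field_simps) (simp add: L_def, algebra)
  have r3: "R - P2 = 1 *\<^sub>R reflect_dir (Z - 1) (P2 - R)"
    using reflect_dir_perp[OF o1] by simp
  have r6: "Q - P = 1 *\<^sub>R reflect_dir (Z - 1) (P - Q)"
    using reflect_dir_perp[OF o2] by simp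
  have l1: "(1 - k) * L / (k * h\<^sup>2) > 0" using k0 k(2) Lpos hpos by simp
  have l2: "(1 - (2 - k) * s0 * t) / (1 - k) > 0" using k(2) m by simp
  have r4: "Q - R = (1 / ((1 - (2 - k) * s0 * t) / (1 - k))) *\<^sub>R reflect_dir (0 - W) (R - P2)"
  proof -
    have "0 - W \<noteq> 0" using apos Wc by (simp add: complex_eq_iff)
    from refl_back[OF this l2 r2] show ?thesis by simp
  qed
  have r5: "P - Q = (1 / ((1 - k) * L / (k * h\<^sup>2))) *\<^sub>R reflect_dir (1 - 0) (Q - R)"
    using refl_back[OF _ l1 r1] by simp
  have l4: "1 / ((1 - (2 - k) * s0 * t) / (1 - k)) > 0" using l2 by (simp only: zero_less_divide_iff) simp
  have l5: "1 / ((1 - k) * L / (k * h\<^sup>2)) > 0" using l1 by (simp only: zero_less_divide_iff) simp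
  have Zne: "1 \<noteq> Z" using hpos Zc by (simp add: complex_eq_iff)
  have W0: "W \<noteq> 0" using apos Wc by (simp add: complex_eq_iff)
  have mP: "P \<in> open_segment 1 Z" using Zne sPb unfolding in_segment P_def by blast
  have mP2: "P2 \<in> open_segment 1 Z" using Zne sP2b unfolding in_segment P2_def by blast
  have mQ: "Q \<in> open_segment 0 1" using sQb unfolding in_segment Q_def by auto
  have mR: "R \<in> open_segment W 0" using W0 sRb unfolding in_segment R_def by blast
  have dPQ: "P \<noteq> Q" using Pc Qc k0 s0pos hpos tpos by (auto simp: complex_eq_iff)
  have dQR: "Q \<noteq> R" using Rc Qc k(2) by (auto simp: complex_eq_iff)
  have dRP2: "R \<noteq> P2" using Rc P2c m by (auto simp: complex_eq_iff)
  have gP: "cr 0 1 P > 0" "cr 1 Z P = 0" "cr Z W P > 0" "cr W 0 P > 0"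
    unfolding P_def cr_comb using sc' sPb by (auto simp: pos_comb2)
  have gP2: "cr 0 1 P2 > 0" "cr 1 Z P2 = 0" "cr Z W P2 > 0" "cr W 0 P2 > 0"
    unfolding P2_def cr_comb using sc' sP2b by (auto simp: pos_comb2)
  have gQ: "cr 0 1 Q = 0" "cr 1 Z Q > 0" "cr Z W Q > 0" "cr W 0 Q > 0"
    unfolding Q_def cr_comb using sc' sQb by (auto simp: pos_comb2)
  have gR: "cr 0 1 R > 0" "cr 1 Z R > 0" "cr Z W R > 0" "cr W 0 R = 0"
    unfolding R_def cr_comb using sc' sRb by (auto simp: pos_comb2)
  have sPQ: "open_segment P Q \<subseteq> interior S"
  proof -
    have "open_segment P Q \<subseteq> oquad 0 1 Z W"
      by (rule seg_oquad) (use dPQ gP gQ in simp_all)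
    thus ?thesis using oquad_interior[OF hS] by blast
  qed
  have sQR: "open_segment Q R \<subseteq> interior S"
  proof -
    have "open_segment Q R \<subseteq> oquad 0 1 Z W"
      by (rule seg_oquad) (use dQR gR gQ in simp_all)
    thus ?thesis using oquad_interior[OF hS] by blast
  qed
  have sRP2: "open_segment R P2 \<subseteq> interior S"
  proof -
    have "open_segment R P2 \<subseteq> oquad 0 1 Z W"
      by (rule seg_oquad) (use dRP2 gR gP2 in simp_all)
    thus ?thesis using oquad_interior[OF hS] by blast
  qed
  have u1: "(R - Q) /\<^sub>R norm (R - Q) = reflect_dir (1 - 0) ((Q - P) /\<^sub>R norm (Q - P))"
    by (rule unit_reflect[OF _ l1 r1]) simp
  have u2: "(P2 - R) /\<^sub>R norm (P2 - R) = reflect_dir (0 - W) ((R - Q) /\<^sub>R norm (R - Q))"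
    by (rule unit_reflect[OF _ l2 r2]) (use W0 in simp)
  have u3: "(R - P2) /\<^sub>R norm (R - P2) = reflect_dir (Z - 1) ((P2 - R) /\<^sub>R norm (P2 - R))"
    by (rule unit_reflect[OF _ _ r3]) (use Zne in auto)
  have u4: "(Q - R) /\<^sub>R norm (Q - R) = reflect_dir (0 - W) ((R - P2) /\<^sub>R norm (R - P2))"
    by (rule unit_reflect[OF _ l4 r4]) (use W0 in simp)
  have u5: "(P - Q) /\<^sub>R norm (P - Q) = reflect_dir (1 - 0) ((Q - R) /\<^sub>R norm (Q - R))"
    by (rule unit_reflect[OF _ l5 r5]) simp
  have u6: "(Q - P) /\<^sub>R norm (Q - P) = reflect_dir (Z - 1) ((P - Q) /\<^sub>R norm (P - Q))"
    by (rule unit_reflect[OF _ _ r6]) (use Zne in auto)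
  define pl where "pl = [P, Q, R, P2, R, Q]"
  define p where "p = (\<lambda>i. pl ! (i mod 6))"
  have key: "p i = pl ! (i mod 6) \<and> p (Suc i) = pl ! (Suc (i mod 6) mod 6) \<and>
      p (Suc (Suc i)) = pl ! (Suc (Suc (i mod 6)) mod 6)" for i
    by (simp add: p_def mod_Suc_eq) (metis mod_Suc_eq)
  have cases6: "i mod 6 = 0 \<or> i mod 6 = 1 \<or> i mod 6 = 2 \<or> i mod 6 = 3 \<or> i mod 6 = 4 \<or> i mod 6 = 5"
    for i :: nat by linarith
  show ?thesis unfolding pbp_def
  proof (intro exI[of _ p] exI[of _ 6] conjI allI)
    show "0 < (6::nat)" by simp
    fix i
    show "p (i + 6) = p i" by (simp add: p_def)
    show "p i \<noteq> p (Suc i)"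
      using cases6[of i] key[of i] dPQ dQR dRP2 by (auto simp: pl_def)
    show "open_segment (p i) (p (Suc i)) \<subseteq> interior S"
      using cases6[of i] key[of i] sPQ sQR sRP2 by (auto simp: pl_def open_segment_commute)
    show "\<exists>(X, Y)\<in>{(0, 1), (1, Z), (W, 0)}. p (Suc i) \<in> open_segment X Y \<and>
       (p (Suc (Suc i)) - p (Suc i)) /\<^sub>R norm (p (Suc (Suc i)) - p (Suc i)) =
       reflect_dir (Y - X) ((p (Suc i) - p i) /\<^sub>R norm (p (Suc i) - p i))"
      using cases6[of i]
    proof (elim disjE)
      assume "i mod 6 = 0" thus ?thesis using key[of i] mQ u1 by (auto simp: pl_def)
    next
      assume "i mod 6 = 1" thus ?thesis using key[of i] mR u2 by (auto simp: pl_def)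
    next
      assume "i mod 6 = 2" thus ?thesis using key[of i] mP2 u3 by (auto simp: pl_def)
    next
      assume "i mod 6 = 3" thus ?thesis using key[of i] mR u4 by (auto simp: pl_def)
    next
      assume "i mod 6 = 4" thus ?thesis using key[of i] mQ u5 by (auto simp: pl_def)
    next
      assume "i mod 6 = 5" thus ?thesis using key[of i] mP u6 by (auto simp: pl_def)
    qed
  qed
qed



lemma pbp_sides:
  assumes "pbp S sides" "\<forall>(a,b)\<in>sides. (a,b) \<in> sides' \<or> (b,a) \<in> sides'"
  shows "pbp S sides'"
  using assms(1) unfolding pbp_def
proof (elim exE conjE, intro exI conjI allI)
  fix p n
  assume H: "0 < (n::nat)" "\<forall>i. p (i + n) = p i" "\<forall>i. p i \<noteq> p (Suc i)"
    "\<forall>i. open_segment (p i) (p (Suc i)) \<subseteq> interior S"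
    "\<forall>i. \<exists>(X, Y)\<in>sides. p (Suc i) \<in> open_segment X Y \<and>
          (p (Suc (Suc i)) - p (Suc i)) /\<^sub>R norm (p (Suc (Suc i)) - p (Suc i)) =
          reflect_dir (Y - X) ((p (Suc i) - p i) /\<^sub>R norm (p (Suc i) - p i))"
  show "0 < n" using H by simp
  fix i
  show "p (i + n) = p i" "p i \<noteq> p (Suc i)" "open_segment (p i) (p (Suc i)) \<subseteq> interior S"
    using H by auto
  from H(5) obtain X Y where XY: "(X, Y) \<in> sides" "p (Suc i) \<in> open_segment X Y"
    "(p (Suc (Suc i)) - p (Suc i)) /\<^sub>R norm (p (Suc (Suc i)) - p (Suc i)) =
          reflect_dir (Y - X) ((p (Suc i) - p i) /\<^sub>R norm (p (Suc i) - p i))" by blast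
  have "reflect_dir (X - Y) = reflect_dir (Y - X)"
    using reflect_dir_neg[of "Y - X"] by (simp add: fun_eq_iff)
  then show "\<exists>(X, Y)\<in>sides'. p (Suc i) \<in> open_segment X Y \<and>
          (p (Suc (Suc i)) - p (Suc i)) /\<^sub>R norm (p (Suc (Suc i)) - p (Suc i)) =
          reflect_dir (Y - X) ((p (Suc i) - p i) /\<^sub>R norm (p (Suc i) - p i))"
  proof -
    have "(X, Y) \<in> sides' \<or> (Y, X) \<in> sides'" using assms(2) XY(1) by blast
    thus ?thesis
    proof
      assume "(X, Y) \<in> sides'" thus ?thesis using XY(2,3) by blast
    next
      assume "(Y, X) \<in> sides'"
      moreover have "p (Suc i) \<in> open_segment Y X" using XY(2) by (simp add: open_segment_commute)
      ultimately show ?thesis using XY(3) \<open>reflect_dir (X - Y) = reflect_dir (Y - X)\<close>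
        by (intro bexI[of _ "(Y, X)"]) simp_all
    qed
  qed
qed



lemma pbp_transfer:
  fixes f l :: "complex \<Rightarrow> complex"
  assumes diff: "\<And>a b. f a - f b = l (a - b)"
    and injf: "inj f"
    and comb: "\<And>u a b. f ((1 - u) *\<^sub>R a + u *\<^sub>R b) = (1 - u) *\<^sub>R f a + u *\<^sub>R f b"
    and opn: "\<And>U. open U \<Longrightarrow> open (f ` U)"
    and refl: "\<And>v w s. v /\<^sub>R norm v = reflect_dir s (w /\<^sub>R norm w) \<Longrightarrow>
        l v /\<^sub>R norm (l v) = reflect_dir (l s) (l w /\<^sub>R norm (l w))"
    and P: "pbp S sides"
  shows "pbp (f ` S) ((\<lambda>(a,b). (f a, f b)) ` sides)"
proof -
  have seg: "open_segment (f a) (f b) = f ` open_segment a b" for a b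
  proof
    show "open_segment (f a) (f b) \<subseteq> f ` open_segment a b"
    proof
      fix x assume "x \<in> open_segment (f a) (f b)"
      then obtain u where u: "f a \<noteq> f b" "0 < u" "u < 1" "x = (1 - u) *\<^sub>R f a + u *\<^sub>R f b"
        by (auto simp: in_segment)
      then have "a \<noteq> b" by auto
      then have "(1 - u) *\<^sub>R a + u *\<^sub>R b \<in> open_segment a b" using u by (auto simp: in_segment)
      moreover have "x = f ((1 - u) *\<^sub>R a + u *\<^sub>R b)" using u(4) comb by simp
      ultimately show "x \<in> f ` open_segment a b" by blast
    qed
    show "f ` open_segment a b \<subseteq> open_segment (f a) (f b)"
    proof
      fix x assume "x \<in> f ` open_segment a b"
      then obtain u where u: "a \<noteq> b" "0 < u" "u < 1" "x = f ((1 - u) *\<^sub>R a + u *\<^sub>R b)"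
        by (auto simp: in_segment)
      have "f a \<noteq> f b" using u(1) injf by (auto dest: injD)
      thus "x \<in> open_segment (f a) (f b)" using u comb by (auto simp: in_segment)
    qed
  qed
  have int: "f ` interior S \<subseteq> interior (f ` S)"
    by (intro interior_maximal image_mono interior_subset opn open_interior)
  from P obtain p n where H: "0 < (n::nat)" "\<forall>i. p (i + n) = p i" "\<forall>i. p i \<noteq> p (Suc i)"
    "\<forall>i. open_segment (p i) (p (Suc i)) \<subseteq> interior S"
    "\<forall>i. \<exists>(X, Y)\<in>sides. p (Suc i) \<in> open_segment X Y \<and>
          (p (Suc (Suc i)) - p (Suc i)) /\<^sub>R norm (p (Suc (Suc i)) - p (Suc i)) =
          reflect_dir (Y - X) ((p (Suc i) - p i) /\<^sub>R norm (p (Suc i) - p i))"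
    unfolding pbp_def by blast
  show ?thesis unfolding pbp_def
  proof (intro exI[of _ "f \<circ> p"] exI[of _ n] conjI allI)
    show "0 < n" by fact
    fix i
    show "(f \<circ> p) (i + n) = (f \<circ> p) i" using H by simp
    show "(f \<circ> p) i \<noteq> (f \<circ> p) (Suc i)" using H injf by (auto dest: injD)
    show "open_segment ((f \<circ> p) i) ((f \<circ> p) (Suc i)) \<subseteq> interior (f ` S)"
    proof -
      have "open_segment ((f \<circ> p) i) ((f \<circ> p) (Suc i)) = f ` open_segment (p i) (p (Suc i))"
        by (simp add: seg)
      also have "\<dots> \<subseteq> f ` interior S" using H(4) by (intro image_mono) blast
      finally show ?thesis using int by blast
    qed
    from H(5) obtain X Y where XY: "(X, Y) \<in> sides" "p (Suc i) \<in> open_segment X Y"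
      "(p (Suc (Suc i)) - p (Suc i)) /\<^sub>R norm (p (Suc (Suc i)) - p (Suc i)) =
          reflect_dir (Y - X) ((p (Suc i) - p i) /\<^sub>R norm (p (Suc i) - p i))" by blast
    show "\<exists>(X, Y)\<in>(\<lambda>(a,b). (f a, f b)) ` sides. (f \<circ> p) (Suc i) \<in> open_segment X Y \<and>
          ((f \<circ> p) (Suc (Suc i)) - (f \<circ> p) (Suc i)) /\<^sub>R norm ((f \<circ> p) (Suc (Suc i)) - (f \<circ> p) (Suc i)) =
          reflect_dir (Y - X) (((f \<circ> p) (Suc i) - (f \<circ> p) i) /\<^sub>R norm ((f \<circ> p) (Suc i) - (f \<circ> p) i))"
    proof (rule bexI[of _ "(f X, f Y)"])
      show "(f X, f Y) \<in> (\<lambda>(a,b). (f a, f b)) ` sides" using XY(1) by force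
      have "f (p (Suc i)) \<in> open_segment (f X) (f Y)" unfolding seg using XY(2) by (rule imageI)
      moreover have "l (p (Suc (Suc i)) - p (Suc i)) /\<^sub>R norm (l (p (Suc (Suc i)) - p (Suc i))) =
          reflect_dir (l (Y - X)) (l (p (Suc i) - p i) /\<^sub>R norm (l (p (Suc i) - p i)))"
        by (rule refl[OF XY(3)])
      ultimately show "case (f X, f Y) of (X, Y) \<Rightarrow> (f \<circ> p) (Suc i) \<in> open_segment X Y \<and>
          ((f \<circ> p) (Suc (Suc i)) - (f \<circ> p) (Suc i)) /\<^sub>R norm ((f \<circ> p) (Suc (Suc i)) - (f \<circ> p) (Suc i)) =
          reflect_dir (Y - X) (((f \<circ> p) (Suc i) - (f \<circ> p) i) /\<^sub>R norm ((f \<circ> p) (Suc i) - (f \<circ> p) i))"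
        by (simp only: comp_def diff prod.case)
    qed
  qed
qed




lemma reflect_dir_mult: "reflect_dir (k * s) (k * u) = k * reflect_dir s u"
proof (cases "k = 0")
  case False
  have i: "(k * a) \<bullet> (k * b) = (cmod k)\<^sup>2 * (a \<bullet> b)" for a b
    by (simp only: cmod_power2) (simp add: inner_complex_def algebra_simps power2_eq_square)
  have c: "2 * ((cmod k)\<^sup>2 * (u \<bullet> s)) / ((cmod k)\<^sup>2 * (s \<bullet> s)) = 2 * (u \<bullet> s) / (s \<bullet> s)"
    using False by simp
  show ?thesis unfolding reflect_dir_def i c
    by (simp add: scaleR_conv_of_real right_diff_distrib mult.left_commute)
qed (simp add: reflect_dir_def)

lemma unit_mult: "k \<noteq> 0 \<Longrightarrow> k * x /\<^sub>R norm (k * x) = (1 / cmod k) *\<^sub>R (k * (x /\<^sub>R norm x))"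
  by (simp add: norm_mult scaleR_conv_of_real divide_inverse mult.commute mult.left_commute)

lemma reflect_dir_cnj: "reflect_dir (cnj s) (cnj u) = cnj (reflect_dir s u)"
  by (simp add: reflect_dir_def inner_complex_def complex_eq_iff)

lemma pbp_affine:
  assumes "k \<noteq> 0" "pbp S sides"
  shows "pbp ((\<lambda>z. c + k * z) ` S) ((\<lambda>(a,b). (c + k * a, c + k * b)) ` sides)"
proof -
  show ?thesis
  proof (rule pbp_transfer[where f = "\<lambda>z. c + k * z" and l = "\<lambda>z. k * z"])
    show "(c + k * a) - (c + k * b) = k * (a - b)" for a b by (simp add: algebra_simps)
    show "inj (\<lambda>z. c + k * z)" using assms(1) by (auto intro: injI)
    show "c + k * ((1 - u) *\<^sub>R a + u *\<^sub>R b) = (1 - u) *\<^sub>R (c + k * a) + u *\<^sub>R (c + k * b)" for u a b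
      by (simp add: scaleR_conv_of_real distrib_left right_diff_distrib left_diff_distrib mult.left_commute)
    show "open ((\<lambda>z. c + k * z) ` U)" if "open U" for U
    proof -
      have "(\<lambda>z. c + k * z) ` U = (\<lambda>z. (z - c) / k) -` U"
      proof (intro set_eqI iffI)
        fix x assume "x \<in> (\<lambda>z. c + k * z) ` U"
        then obtain z where "z \<in> U" "x = c + k * z" by blast
        thus "x \<in> (\<lambda>z. (z - c) / k) -` U" using assms(1) by simp
      next
        fix x assume "x \<in> (\<lambda>z. (z - c) / k) -` U"
        hence "(x - c) / k \<in> U" by simp
        moreover have "x = c + k * ((x - c) / k)" using assms(1) by simp
        ultimately show "x \<in> (\<lambda>z. c + k * z) ` U" by (rule rev_image_eqI)
      qed
      moreover have "open ((\<lambda>z. (z - c) / k) -` U)"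
        by (rule continuous_open_vimage[OF that]) (use assms(1) in \<open>intro continuous_intros\<close>)
      ultimately show ?thesis by simp
    qed
    show "k * v /\<^sub>R norm (k * v) = reflect_dir (k * s) (k * w /\<^sub>R norm (k * w))"
      if "v /\<^sub>R norm v = reflect_dir s (w /\<^sub>R norm w)" for v w s
    proof -
      show ?thesis unfolding unit_mult[OF assms(1)] that
        by (simp add: reflect_dir_scale reflect_dir_mult[symmetric])
    qed
  qed (fact assms(2))
qed

lemma pbp_cnj:
  assumes "pbp S sides"
  shows "pbp (cnj ` S) ((\<lambda>(a,b). (cnj a, cnj b)) ` sides)"
proof -
  show ?thesis
  proof (rule pbp_transfer[where f = cnj and l = cnj])
    show "cnj a - cnj b = cnj (a - b)" for a b by simp
    show "inj cnj" by (auto intro: injI)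
    show "cnj ((1 - u) *\<^sub>R a + u *\<^sub>R b) = (1 - u) *\<^sub>R cnj a + u *\<^sub>R cnj b" for u a b
      by (simp add: complex_eq_iff)
    show "open (cnj ` U)" if "open U" for U
    proof -
      have "cnj ` U = cnj -` U"
      proof (intro set_eqI iffI)
        fix x assume "x \<in> cnj ` U" thus "x \<in> cnj -` U" by auto
      next
        fix x assume "x \<in> cnj -` U"
        hence "cnj x \<in> U" by simp
        moreover have "x = cnj (cnj x)" by simp
        ultimately show "x \<in> cnj ` U" by (rule rev_image_eqI)
      qed
      thus ?thesis by (simp add: continuous_open_vimage[OF that] continuous_cnj continuous_ident)
    qed
    show "cnj v /\<^sub>R norm (cnj v) = reflect_dir (cnj s) (cnj w /\<^sub>R norm (cnj w))"
      if "v /\<^sub>R norm v = reflect_dir s (w /\<^sub>R norm w)" for v w s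
    proof -
      have e: "cnj x /\<^sub>R norm (cnj x) = cnj (x /\<^sub>R norm x)" for x
        by (simp add: complex_eq_iff)
      show ?thesis unfolding e that reflect_dir_cnj ..
    qed
  qed (fact assms)
qed



lemma cr_aff: "cr (c + k * a) (c + k * b) (c + k * d) = (cmod k)\<^sup>2 * cr a b d"
  by (simp only: cmod_power2) (simp add: cr_def cross_def algebra_simps power2_eq_square)

lemma inner_aff: "((c + k * a) - (c + k * b)) \<bullet> ((c + k * d) - (c + k * e)) = (cmod k)\<^sup>2 * ((a - b) \<bullet> (d - e))"
  by (simp only: cmod_power2) (simp add: inner_complex_def algebra_simps power2_eq_square)

lemma cr_cnj: "cr (cnj a) (cnj b) (cnj d) = - cr a b d"
  by (simp add: cr_def cross_def algebra_simps)

lemma cr_swap: "cr b a d = - cr a b d"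
  by (simp add: cr_def cross_def algebra_simps)

lemma inner_cnj: "cnj a \<bullet> cnj b = a \<bullet> b"
  by (simp add: inner_complex_def)

lemma core_ccw:
  assumes sc: "sconv X Y Z W" and h1: "(Y - X) \<bullet> (W - X) = 0"
    and h2: "(Z - Y) \<bullet> (X - Y) > 0" and h3: "(Z - Y) \<bullet> (Z - X) > 0"
    and hS: "oquad X Y Z W \<subseteq> S"
  shows "pbp S {(X,Y),(Y,Z),(W,X)}"
proof -
  define k where "k = Y - X"
  have k0: "k \<noteq> 0" using sc by (auto simp: sconv_def k_def)
  define f where "f = (\<lambda>z. X + k * z)"
  define g where "g = (\<lambda>z. (z - X) / k)"
  have fg: "f (g z) = z" for z using k0 by (simp add: f_def g_def)
  have f0: "f 0 = X" and f1: "f 1 = Y" by (simp_all add: f_def k_def)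
  define Z' where "Z' = g Z"
  define W' where "W' = g W"
  have fZ: "f Z' = Z" and fW: "f W' = W" by (simp_all add: Z'_def W'_def fg)
  have kp: "(cmod k)\<^sup>2 > 0" using k0 by simp
  have crf: "cr (f a) (f b) (f d) = (cmod k)\<^sup>2 * cr a b d" for a b d
    by (simp add: f_def cr_aff)
  have inf: "(f a - f b) \<bullet> (f d - f e) = (cmod k)\<^sup>2 * ((a - b) \<bullet> (d - e))" for a b d e
    unfolding f_def by (rule inner_aff)
  have pos: "0 < cr (f a) (f b) (f d) \<longleftrightarrow> 0 < cr a b d" for a b d
    unfolding crf using kp by (simp add: zero_less_mult_iff)
  have sc': "sconv 0 1 Z' W'"
    unfolding sconv_def using sc[unfolded sconv_def] pos[of 0 1 Z'] pos[of 0 1 W'] pos[of 1 Z' W']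
      pos[of 1 Z' 0] pos[of Z' W' 0] pos[of Z' W' 1] pos[of W' 0 1] pos[of W' 0 Z']
    unfolding f0 f1 fZ fW by simp
  have h1': "Re W' = 0"
  proof -
    have "(cmod k)\<^sup>2 * ((1 - 0) \<bullet> (W' - 0)) = 0" using h1 inf[of 1 0 W' 0] f0 f1 fW by simp
    thus ?thesis using kp by (simp add: inner_complex_def)
  qed
  have h2': "Re Z' < 1"
  proof -
    have "(cmod k)\<^sup>2 * ((Z' - 1) \<bullet> (0 - 1)) > 0" using h2 inf[of Z' 1 0 1] f0 f1 fZ by simp
    hence "(Z' - 1) \<bullet> (0 - 1) > 0" using kp by (simp add: zero_less_mult_iff)
    thus ?thesis by (simp add: inner_complex_def)
  qed
  have h3': "(Re Z' - 1) * Re Z' + (Im Z')\<^sup>2 > 0"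
  proof -
    have "(cmod k)\<^sup>2 * ((Z' - 1) \<bullet> (Z' - 0)) > 0" using h3 inf[of Z' 1 Z' 0] f0 f1 fZ by simp
    hence "(Z' - 1) \<bullet> (Z' - 0) > 0" using kp by (simp add: zero_less_mult_iff)
    thus ?thesis by (simp add: inner_complex_def power2_eq_square)
  qed
  have hS': "oquad 0 1 Z' W' \<subseteq> f -` S"
  proof
    fix p assume "p \<in> oquad 0 1 Z' W'"
    hence "f p \<in> oquad X Y Z W"
      unfolding oquad_def mem_Collect_eq
      using pos[of 0 1 p] pos[of 1 Z' p] pos[of Z' W' p] pos[of W' 0 p] f0 f1 fZ fW by simp
    thus "p \<in> f -` S" using hS by auto
  qed
  have P: "pbp (f -` S) {(0,1),(1,Z'),(W',0)}" by (rule core_frame[OF sc' h1' h2' h3' hS'])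
  have "pbp ((\<lambda>z. X + k * z) ` (f -` S)) ((\<lambda>(a,b). (X + k * a, X + k * b)) ` {(0,1),(1,Z'),(W',0)})"
    by (rule pbp_affine[OF k0 P])
  moreover have "(\<lambda>z. X + k * z) ` (f -` S) = S"
  proof -
    have "surj f" using fg by (rule surjI)
    hence "f ` (f -` S) = S" by (rule surj_image_vimage_eq)
    thus ?thesis by (simp add: f_def)
  qed
  moreover have "(\<lambda>(a,b). (X + k * a, X + k * b)) ` {(0,1),(1,Z'),(W',0)} = {(X,Y),(Y,Z),(W,X)}"
    using f0 f1 fZ fW by (simp add: f_def)
  ultimately show ?thesis by simp
qed

lemma core_cw:
  assumes sc: "sconv X W Z Y" and h1: "(Y - X) \<bullet> (W - X) = 0"
    and h2: "(Z - Y) \<bullet> (X - Y) > 0" and h3: "(Z - Y) \<bullet> (Z - X) > 0"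
    and hS: "oquad X W Z Y \<subseteq> S"
  shows "pbp S {(X,Y),(Y,Z),(W,X)}"
proof -
  have sc': "sconv (cnj X) (cnj Y) (cnj Z) (cnj W)"
    unfolding sconv_def cr_cnj using sc[unfolded sconv_def]
      cr_swap[of Y X Z] cr_swap[of Y X W] cr_swap[of Z Y W] cr_swap[of Z Y X]
      cr_swap[of W Z X] cr_swap[of W Z Y] cr_swap[of X W Y] cr_swap[of X W Z]
    by linarith
  have h1': "(cnj Y - cnj X) \<bullet> (cnj W - cnj X) = 0" using h1 by (simp add: inner_complex_def algebra_simps)
  have h2': "(cnj Z - cnj Y) \<bullet> (cnj X - cnj Y) > 0" using h2 by (simp add: inner_complex_def algebra_simps)
  have h3': "(cnj Z - cnj Y) \<bullet> (cnj Z - cnj X) > 0" using h3 by (simp add: inner_complex_def algebra_simps)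
  have hS': "oquad (cnj X) (cnj Y) (cnj Z) (cnj W) \<subseteq> cnj ` S"
  proof
    fix p assume p: "p \<in> oquad (cnj X) (cnj Y) (cnj Z) (cnj W)"
    have e: "cr (cnj a) (cnj b) p = - cr a b (cnj p)" for a b
      using cr_cnj[of a b "cnj p"] by simp
    have "cnj p \<in> oquad X W Z Y"
      using p unfolding oquad_def mem_Collect_eq e
      using cr_swap[of Y X "cnj p"] cr_swap[of Z Y "cnj p"] cr_swap[of W Z "cnj p"] cr_swap[of X W "cnj p"]
      by linarith
    hence "cnj p \<in> S" using hS by blast
    moreover have "p = cnj (cnj p)" by simp
    ultimately show "p \<in> cnj ` S" by (rule rev_image_eqI)
  qed
  have P: "pbp (cnj ` S) {(cnj X, cnj Y), (cnj Y, cnj Z), (cnj W, cnj X)}"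
    by (rule core_ccw[OF sc' h1' h2' h3' hS'])
  have "pbp (cnj ` cnj ` S) ((\<lambda>(a,b). (cnj a, cnj b)) ` {(cnj X, cnj Y), (cnj Y, cnj Z), (cnj W, cnj X)})"
    by (rule pbp_cnj[OF P])
  moreover have "cnj ` cnj ` S = S" by (simp add: image_image)
  ultimately show ?thesis by simp
qed



lemma vang_ratio_bound: "\<bar>((u::complex) \<bullet> v) / (norm u * norm v)\<bar> \<le> 1"
proof (cases "norm u * norm v = 0")
  case False
  then have n: "norm u * norm v > 0" by (simp add: less_le)
  have "\<bar>(u \<bullet> v) / (norm u * norm v)\<bar> = \<bar>u \<bullet> v\<bar> / (norm u * norm v)"
    using n by (simp add: abs_divide)
  also have "\<dots> \<le> 1" using n Cauchy_Schwarz_ineq2[of u v] by (simp add: divide_le_eq_1_pos)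
  finally show ?thesis .
next
  case True
  then have "u = 0 \<or> v = 0" by simp
  then show ?thesis by auto
qed

lemma cos_vang: "cos (vang u v) = (u \<bullet> v) / (norm u * norm v)"
  unfolding vang_def using vang_ratio_bound[of u v] by (simp add: cos_arccos_abs)

lemma vang_bounds: "0 \<le> vang u v \<and> vang u v \<le> pi"
proof -
  have b: "\<bar>(u \<bullet> v) / (norm u * norm v)\<bar> \<le> 1" by (rule vang_ratio_bound)
  have "- 1 \<le> (u \<bullet> v) / (norm u * norm v)" "(u \<bullet> v) / (norm u * norm v) \<le> 1"
    using abs_le_D1[OF b] abs_le_D2[OF b] by auto
  thus ?thesis unfolding vang_def by (rule arccos_bounded)
qed

lemma vang_ge0: "0 \<le> vang u v" and vang_le_pi: "vang u v \<le> pi"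
  using vang_bounds[of u v] by auto

lemma vang_right: "vang u v = pi / 2 \<Longrightarrow> u \<bullet> v = 0"
proof -
  assume a: "vang u v = pi / 2"
  have "cos (vang u v) = 0" unfolding a by simp
  hence "(u \<bullet> v) / (norm u * norm v) = 0" using cos_vang[of u v] by simp
  hence "u \<bullet> v = 0 \<or> norm u * norm v = 0" by simp
  thus ?thesis by auto
qed

lemma vang_acute: "vang u v < pi / 2 \<Longrightarrow> u \<bullet> v > 0"
proof -
  assume a: "vang u v < pi / 2"
  have "cos (vang u v) > 0" using a vang_ge0[of u v] by (intro cos_gt_zero_pi) auto
  hence "(u \<bullet> v) / (norm u * norm v) > 0" by (simp add: cos_vang)
  moreover have "norm u * norm v \<ge> 0" by simp
  ultimately show ?thesis by (auto simp: zero_less_divide_iff)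
qed

lemma vang_cong: "u \<bullet> v = u' \<bullet> v' \<Longrightarrow> norm u * norm v = norm u' * norm v' \<Longrightarrow> vang u v = vang u' v'"
  by (simp add: vang_def)

lemma vang_param:
  assumes "\<bar>vang (Complex a b) 1 - pi / 4\<bar> < pi / 12"
  shows "a > 0 \<and> b\<^sup>2 < 3 * a\<^sup>2 \<and> a\<^sup>2 < 3 * b\<^sup>2"
proof -
  define r where "r = sqrt (a\<^sup>2 + b\<^sup>2)"
  have nr: "norm (Complex a b) = r" by (simp add: r_def cmod_def)
  define c where "c = a / r"
  have cv: "cos (vang (Complex a b) 1) = c" using cos_vang[of "Complex a b" 1] by (simp add: nr c_def)
  have th0: "vang (Complex a b) 1 - pi / 4 < pi / 12" "- (vang (Complex a b) 1 - pi / 4) < pi / 12"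
    using assms unfolding abs_less_iff by auto
  have th: "pi / 6 < vang (Complex a b) 1" "vang (Complex a b) 1 < pi / 3" using th0 by linarith+
  have "cos (vang (Complex a b) 1) < cos (pi / 6)"
    using th vang_le_pi[of "Complex a b" 1] by (subst cos_mono_less_eq) auto
  hence c1: "c < sqrt 3 / 2" by (simp add: cv cos_30)
  have "cos (pi / 3) < cos (vang (Complex a b) 1)"
    using th vang_ge0[of "Complex a b" 1] by (subst cos_mono_less_eq) auto
  hence c2: "1 / 2 < c" by (simp add: cv cos_60)
  have r0: "r > 0"
  proof -
    have "r \<ge> 0" by (simp add: r_def)
    moreover have "r \<noteq> 0" using c2 by (auto simp: c_def)
    ultimately show ?thesis by simp
  qed
  have ap: "a > 0" using c2 r0 by (simp add: c_def field_simps)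
  have rr: "r\<^sup>2 = a\<^sup>2 + b\<^sup>2" by (simp add: r_def)
  have "r < 2 * a" using c2 r0 by (simp add: c_def field_simps)
  hence "r\<^sup>2 < (2 * a)\<^sup>2" using r0 by (intro power_strict_mono) auto
  hence i1: "b\<^sup>2 < 3 * a\<^sup>2" using rr by (simp add: power_mult_distrib)
  have "2 * a < sqrt 3 * r" using c1 r0 by (simp add: c_def field_simps)
  hence "(2 * a)\<^sup>2 < (sqrt 3 * r)\<^sup>2" using ap by (intro power_strict_mono) auto
  hence i2: "a\<^sup>2 < 3 * b\<^sup>2" using rr by (simp add: power_mult_distrib)
  show ?thesis using ap i1 i2 by simp
qed

lemma vang_sum:
  assumes "a > 0" "b > 0" "a' > 0" "b' > 0"
  shows "cos (vang (Complex a b) 1 + vang (Complex a' b') 1) =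
           (a * a' - b * b') / (cmod (Complex a b) * cmod (Complex a' b'))"
proof -
  have sn: "sin (vang (Complex a b) 1) = b / cmod (Complex a b)" if "b > 0" for a b :: real
  proof -
    have r0: "cmod (Complex a b) > 0" using that by (auto simp: complex_eq_iff)
    have "sin (vang (Complex a b) 1) = sqrt (1 - (a / cmod (Complex a b))\<^sup>2)"
      unfolding vang_def using vang_ratio_bound[of "Complex a b" 1] by (simp add: sin_arccos_abs)
    also have "1 - (a / cmod (Complex a b))\<^sup>2 = (b / cmod (Complex a b))\<^sup>2"
    proof -
      have "(cmod (Complex a b))\<^sup>2 = a\<^sup>2 + b\<^sup>2" by (simp add: cmod_power2)
      moreover have "(cmod (Complex a b))\<^sup>2 \<noteq> 0" using r0 by simp
      ultimately show ?thesis by (simp add: power_divide field_simps)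
    qed
    also have "sqrt \<dots> = b / cmod (Complex a b)" using that r0 by simp
    finally show ?thesis .
  qed
  show ?thesis
    unfolding cos_add sn[OF assms(2)] sn[OF assms(4)] cos_vang
    by (simp add: diff_divide_distrib)
qed

lemma vang_sum_right:
  assumes "a > 0" "b > 0" "a' > 0" "b' > 0"
    and "vang (Complex a b) 1 + vang (Complex a' b') 1 = pi / 2"
  shows "a * a' = b * b'"
proof -
  have "cos (vang (Complex a b) 1 + vang (Complex a' b') 1) = 0" unfolding assms(5) by simp
  moreover have "cmod (Complex a b) * cmod (Complex a' b') \<noteq> 0" using assms by (auto simp: complex_eq_iff)
  ultimately show ?thesis unfolding vang_sum[OF assms(1-4)] by simp
qed

lemma vang_sum_acute:
  assumes "a > 0" "b > 0" "a' > 0" "b' > 0"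
    and "vang (Complex a b) 1 + vang (Complex a' b') 1 < pi / 2"
  shows "a * a' > b * b'"
proof -
  have "cos (vang (Complex a b) 1 + vang (Complex a' b') 1) > 0"
    using assms(5) vang_ge0[of "Complex a b" 1] vang_ge0[of "Complex a' b'" 1]
    by (intro cos_gt_zero_pi) auto
  moreover have "cmod (Complex a b) * cmod (Complex a' b') > 0" using assms by (auto simp: complex_eq_iff)
  ultimately show ?thesis unfolding vang_sum[OF assms(1-4)] by (simp add: zero_less_divide_iff)
qed



definition Pp :: "real \<Rightarrow> real \<Rightarrow> bool" where
  "Pp u v \<longleftrightarrow> u > 0 \<and> v\<^sup>2 < 3 * u\<^sup>2 \<and> u\<^sup>2 < 3 * v\<^sup>2"

lemma hard:
  fixes x y x' y' :: real
  assumes "Pp x y" "Pp (1 - x) y" "Pp x' y'" "Pp (1 - x') y'" "y > 0" "y' > 0"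
    and r: "y\<^sup>2 = x * (1 - x)" and ac: "x * x' > y * y'"
  shows "x'\<^sup>2 + y'\<^sup>2 - x * x' + y * y' > 0"
proof -
  have x0: "x > 0" and x1: "1 - x > 0" and x'0: "x' > 0" and x'1: "1 - x' > 0"
    and a1: "x\<^sup>2 < 3 * y\<^sup>2" and a2: "y\<^sup>2 < 3 * (1 - x)\<^sup>2" and a3: "x'\<^sup>2 < 3 * y'\<^sup>2"
    and a4: "(1 - x')\<^sup>2 < 3 * y'\<^sup>2"
    using assms(1-4) by (auto simp: Pp_def)
  have "x * (1 - x) < (3 * (1 - x)) * (1 - x)" using a2 r by (simp only: power2_eq_square mult.assoc)
  hence "x < 3 * (1 - x)" using x1 by simp
  hence xb: "4 * x < 3" by simp
  have "(x * x')\<^sup>2 < (3 * (y * y'))\<^sup>2"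
  proof -
    have "(x * x')\<^sup>2 = x\<^sup>2 * x'\<^sup>2" by (simp add: power_mult_distrib)
    also have "\<dots> < (3 * y\<^sup>2) * (3 * y'\<^sup>2)"
      using a1 a3 x'0 by (intro mult_strict_mono) auto
    also have "\<dots> = (3 * (y * y'))\<^sup>2" by (simp add: power_mult_distrib)
    finally show ?thesis .
  qed
  hence yy: "x * x' < 3 * (y * y')"
    by (rule power_less_imp_less_base) (use assms(5,6) in simp)
  have b1: "x * x' - y * y' < x' / 2"
  proof -
    have "x * x' - y * y' < x * x' - x * x' / 3" using yy by simp
    also have "\<dots> = (2 / 3) * x * x'" by simp
    also have "\<dots> \<le> x' / 2" using xb x'0 by (simp add: mult_right_mono)
    finally show ?thesis .
  qed
  have b2: "x' / 2 < x'\<^sup>2 + y'\<^sup>2"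
  proof -
    have "x' / 2 < x'\<^sup>2 + (1 - x')\<^sup>2 / 3"
    proof -
      have "0 < 4 * (x' - 7/16)\<^sup>2 + 15 / 64" by (simp add: add_nonneg_pos)
      thus ?thesis by (simp add: power2_eq_square algebra_simps field_simps)
    qed
    thus ?thesis using a4 by simp
  qed
  show ?thesis using b1 b2 by simp
qed

lemma sconv_rot: "sconv X Y Z W \<Longrightarrow> sconv Y Z W X"
  unfolding sconv_def by auto

lemma oquad_rot: "oquad X Y Z W = oquad Y Z W X"
  unfolding oquad_def by auto

lemma base_sconv:
  fixes b d :: complex
  assumes "0 < Re b" "Re b < 1" "0 < Re d" "Re d < 1" "Im b > 0" "Im d < 0"
  shows "sconv 0 d 1 b"
proof -
  define x where "x = Re b"
  define y where "y = Im b"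
  define x' where "x' = Re d"
  define y' where "y' = - Im d"
  have p: "0 < x" "x < 1" "0 < x'" "x' < 1" "0 < y" "0 < y'"
    using assms by (auto simp: x_def y_def x'_def y'_def)
  have e1: "0 < x' * y + x * y'" using p by (simp add: add_pos_pos)
  have e2: "0 < (1 - x') * y + y' * (1 - x)" using p by (simp add: add_pos_pos)
  have e3: "0 < (1 - x) * y' + y * (1 - x')" using p by (simp add: add_pos_pos)
  show ?thesis
    unfolding sconv_def cr_def cross_def
    using p e1 e2 e3 unfolding x_def y_def x'_def y'_def
    by (simp add: algebra_simps)
qed

lemma base_oquad:
  fixes b d :: complex
  assumes "0 < Re b" "Re b < 1" "0 < Re d" "Re d < 1" "Im b > 0" "Im d < 0"
  shows "oquad 0 d 1 b \<subseteq> quad_region 0 b 1 d"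
proof
  fix p assume "p \<in> oquad 0 d 1 b"
  hence c: "cr 0 d p > 0" "cr d 1 p > 0" "cr 1 b p > 0" "cr b 0 p > 0" by (auto simp: oquad_def)
  define x where "x = Re b"
  define y where "y = Im b"
  define x' where "x' = Re d"
  define y' where "y' = - Im d"
  define P where "P = Re p"
  define Q where "Q = Im p"
  have bb: "b = Complex x y" and dd: "d = Complex x' (- y')" and pp: "p = Complex P Q"
    by (simp_all add: x_def y_def x'_def y'_def P_def Q_def complex_eq_iff)
  have py: "0 < y" "0 < y'" using assms by (auto simp: y_def y'_def)
  have c1: "x' * Q + y' * P > 0" using c(1) by (simp add: cr_def cross_def bb dd pp algebra_simps)
  have c2: "(1 - x') * Q + y' - y' * P > 0" using c(2) by (simp add: cr_def cross_def bb dd pp algebra_simps)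
  have c3: "y * (1 - P) + (x - 1) * Q > 0" using c(3) by (simp add: cr_def cross_def bb dd pp algebra_simps)
  have c4: "y * P - x * Q > 0" using c(4) by (simp add: cr_def cross_def bb dd pp algebra_simps)
  show "p \<in> quad_region 0 b 1 d"
  proof (cases "Q \<ge> 0")
    case True
    define v where "v = Q / y"
    define w where "w = (y * P - x * Q) / y"
    define u where "u = (y * (1 - P) + (x - 1) * Q) / y"
    have "p = u *\<^sub>R 0 + v *\<^sub>R b + w *\<^sub>R 1"
      using py by (simp add: pp bb complex_eq_iff v_def w_def field_simps)
    moreover have "0 \<le> u" "0 \<le> v" "0 \<le> w" "u + v + w = 1"
      using py True c3 c4 by (auto simp: u_def v_def w_def field_simps)
    ultimately have "p \<in> convex hull {0, b, 1}" unfolding convex_hull_3 by blast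
    thus ?thesis by (simp add: quad_region_def)
  next
    case False
    define w where "w = - Q / y'"
    define v where "v = (y' * P + x' * Q) / y'"
    define u where "u = ((1 - x') * Q + y' - y' * P) / y'"
    have "p = u *\<^sub>R 0 + v *\<^sub>R 1 + w *\<^sub>R d"
      using py by (simp add: pp dd complex_eq_iff v_def w_def field_simps)
    moreover have "0 \<le> u" "0 \<le> v" "0 \<le> w" "u + v + w = 1"
      using py False c1 c2 by (auto simp: u_def v_def w_def field_simps)
    ultimately have "p \<in> convex hull {0, 1, d}" unfolding convex_hull_3 by blast
    thus ?thesis by (simp add: quad_region_def)
  qed
qed



lemma has_pbp_eq: "has_periodic_billiard_path A B C D = pbp (quad_region A B C D) (quad_sides A B C D)"
  by (simp add: has_periodic_billiard_path_def pbp_def)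

lemma normalized:
  fixes b d :: complex
  assumes ib: "Im b > 0" and id: "Im d < 0"
    and ns: "near_square (pi / 12) 0 b 1 d" and ra: "right_adj_acute 0 b 1 d"
  shows "has_periodic_billiard_path 0 b 1 d"
proof -
  define x where "x = Re b"
  define y where "y = Im b"
  define x' where "x' = Re d"
  define y' where "y' = - Im d"
  have bb: "b = Complex x y" and dd: "d = Complex x' (- y')"
    by (simp_all add: x_def y_def x'_def y'_def complex_eq_iff)
  have py: "0 < y" "0 < y'" using ib id by (auto simp: y_def y'_def)
  have e1: "vang (b - 0) (1 - 0) = vang (Complex x y) 1" by (simp add: bb)
  have e2: "vang (b - 1) (0 - 1) = vang (Complex (1 - x) y) 1"
    by (rule vang_cong) (simp_all add: bb inner_complex_def cmod_def power2_commute)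
  have e3: "vang (d - 1) (0 - 1) = vang (Complex (1 - x') y') 1"
    by (rule vang_cong) (simp_all add: dd inner_complex_def cmod_def power2_commute)
  have e4: "vang (d - 0) (1 - 0) = vang (Complex x' y') 1"
    by (rule vang_cong) (simp_all add: dd inner_complex_def cmod_def)
  have ns': "\<forall>a\<in>set [vang (Complex x y) 1, vang (Complex (1 - x) y) 1, vang (Complex (1 - x') y') 1,
      vang (Complex x' y') 1]. \<bar>a - pi / 4\<bar> < pi / 12"
    using ns unfolding near_square_def quad_params_def e1 e2 e3 e4 .
  have P1: "Pp x y" using vang_param[of x y] ns' by (simp add: Pp_def)
  have P2: "Pp (1 - x) y" using vang_param[of "1 - x" y] ns' by (simp add: Pp_def)
  have P3: "Pp (1 - x') y'" using vang_param[of "1 - x'" y'] ns' by (simp add: Pp_def)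
  have P4: "Pp x' y'" using vang_param[of x' y'] ns' by (simp add: Pp_def)
  have xs: "0 < x" "x < 1" "0 < x'" "x' < 1" using P1 P2 P3 P4 by (auto simp: Pp_def)
  define aA where "aA = vang (Complex x y) 1 + vang (Complex x' y') 1"
  define aB where "aB = vang (0 - b) (1 - b)"
  define aC where "aC = vang (Complex (1 - x) y) 1 + vang (Complex (1 - x') y') 1"
  define aD where "aD = vang (0 - d) (1 - d)"
  have ia: "interior_angles 0 b 1 d = [aA, aB, aC, aD]"
    unfolding interior_angles_def aA_def aB_def aC_def aD_def e1 e2 e3 e4 by simp
  have rA: "x * x' = y * y'" if "aA = pi / 2"
    using vang_sum_right[of x y x' y'] that xs py unfolding aA_def by simp
  have cA: "x * x' > y * y'" if "aA < pi / 2"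
    using vang_sum_acute[of x y x' y'] that xs py unfolding aA_def by simp
  have rC: "(1 - x) * (1 - x') = y * y'" if "aC = pi / 2"
    using vang_sum_right[of "1 - x" y "1 - x'" y'] that xs py unfolding aC_def by simp
  have cC: "(1 - x) * (1 - x') > y * y'" if "aC < pi / 2"
    using vang_sum_acute[of "1 - x" y "1 - x'" y'] that xs py unfolding aC_def by simp
  have rB: "y\<^sup>2 = x * (1 - x)" if "aB = pi / 2"
    using vang_right[of "0 - b" "1 - b"] that unfolding aB_def
    by (simp add: bb inner_complex_def power2_eq_square algebra_simps)
  have cB: "y\<^sup>2 > x * (1 - x)" if "aB < pi / 2"
    using vang_acute[of "0 - b" "1 - b"] that unfolding aB_def
    by (simp add: bb inner_complex_def power2_eq_square algebra_simps)
  have rD: "y'\<^sup>2 = x' * (1 - x')" if "aD = pi / 2"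
    using vang_right[of "0 - d" "1 - d"] that unfolding aD_def
    by (simp add: dd inner_complex_def power2_eq_square algebra_simps)
  have cD: "y'\<^sup>2 > x' * (1 - x')" if "aD < pi / 2"
    using vang_acute[of "0 - d" "1 - d"] that unfolding aD_def
    by (simp add: dd inner_complex_def power2_eq_square algebra_simps)
  have base: "0 < Re b" "Re b < 1" "0 < Re d" "Re d < 1" "Im b > 0" "Im d < 0"
    using xs ib id by (auto simp: x_def x'_def)
  define S where "S = quad_region 0 b 1 d"
  have sc0: "sconv 0 d 1 b" by (rule base_sconv[OF base])
  have sc1: "sconv d 1 b 0" by (rule sconv_rot[OF sc0])
  have sc2: "sconv 1 b 0 d" by (rule sconv_rot[OF sc1])
  have sc3: "sconv b 0 d 1" by (rule sconv_rot[OF sc2])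
  have oq0: "oquad 0 d 1 b \<subseteq> S" unfolding S_def by (rule base_oquad[OF base])
  have oq1: "oquad d 1 b 0 \<subseteq> S" using oq0 oquad_rot[of 0 d 1 b] by simp
  have oq2: "oquad 1 b 0 d \<subseteq> S" using oq1 oquad_rot[of d 1 b 0] by simp
  have oq3: "oquad b 0 d 1 \<subseteq> S" using oq2 oquad_rot[of 1 b 0 d] by simp
  have fin: "has_periodic_billiard_path 0 b 1 d" if "pbp S sides"
    "\<forall>(a, c)\<in>sides. (a, c) \<in> quad_sides 0 b 1 d \<or> (c, a) \<in> quad_sides 0 b 1 d" for sides
    unfolding has_pbp_eq S_def[symmetric] by (rule pbp_sides[OF that])
  have H3a: "(d - 0) \<bullet> (d - b) > 0" if "aB = pi / 2" "aA < pi / 2"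
    using hard[OF P1 P2 P4 P3 py rB[OF that(1)] cA[OF that(2)]]
    by (simp add: bb dd inner_complex_def power2_eq_square algebra_simps)
  have H3b: "(d - 1) \<bullet> (d - b) > 0" if "aB = pi / 2" "aC < pi / 2"
  proof -
    have "y\<^sup>2 = (1 - x) * (1 - (1 - x))" using rB[OF that(1)] by (simp add: algebra_simps)
    from hard[OF P2 _ P3 _ py this cC[OF that(2)]] P1 P4
    show ?thesis by (simp add: bb dd inner_complex_def power2_eq_square algebra_simps)
  qed
  have H3c: "(b - 0) \<bullet> (b - d) > 0" if "aD = pi / 2" "aA < pi / 2"
  proof -
    have "x' * x > y' * y" using cA[OF that(2)] by (simp add: mult.commute)
    from hard[OF P4 P3 P1 P2 py(2) py(1) rD[OF that(1)] this]
    show ?thesis by (simp add: bb dd inner_complex_def power2_eq_square algebra_simps)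
  qed
  have H3d: "(b - 1) \<bullet> (b - d) > 0" if "aD = pi / 2" "aC < pi / 2"
  proof -
    have "y'\<^sup>2 = (1 - x') * (1 - (1 - x'))" using rD[OF that(1)] by (simp add: algebra_simps)
    moreover have "(1 - x') * (1 - x) > y' * y" using cC[OF that(2)] by (simp add: mult.commute)
    ultimately have "(1 - x)\<^sup>2 + y\<^sup>2 - (1 - x') * (1 - x) + y' * y > 0"
      using hard[OF P3 _ P2 _ py(2) py(1)] P1 P4 by simp
    thus ?thesis by (simp add: bb dd inner_complex_def power2_eq_square algebra_simps)
  qed
  from ra obtain i where i: "i < 4" and
    hi: "(interior_angles 0 b 1 d ! i = pi / 2 \<and> interior_angles 0 b 1 d ! ((i + 1) mod 4) < pi / 2) \<or>
         (interior_angles 0 b 1 d ! ((i + 1) mod 4) = pi / 2 \<and> interior_angles 0 b 1 d ! i < pi / 2)"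
    unfolding right_adj_acute_def Let_def by blast
  have "i = 0 \<or> i = 1 \<or> i = 2 \<or> i = 3" using i by auto
  then consider
      (c1) "aA = pi / 2" "aB < pi / 2" | (c3) "aB = pi / 2" "aA < pi / 2"
    | (c4) "aB = pi / 2" "aC < pi / 2" | (c5) "aC = pi / 2" "aB < pi / 2"
    | (c6) "aC = pi / 2" "aD < pi / 2" | (c7) "aD = pi / 2" "aC < pi / 2"
    | (c8) "aD = pi / 2" "aA < pi / 2" | (c2) "aA = pi / 2" "aD < pi / 2"
    using hi unfolding ia by auto
  then show ?thesis
  proof cases
    case c1
    have "pbp S {(0, b), (b, 1), (d, 0)}"
    proof (rule core_cw[OF sc0 _ _ _ oq0])
      show "(b - 0) \<bullet> (d - 0) = 0" using rA[OF c1(1)] by (simp add: bb dd inner_complex_def mult.commute)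
      show "(1 - b) \<bullet> (0 - b) > 0" using cB[OF c1(2)] by (simp add: bb inner_complex_def power2_eq_square algebra_simps)
      show "(1 - b) \<bullet> (1 - 0) > 0" using xs by (simp add: bb inner_complex_def)
    qed
    thus ?thesis by (rule fin) (auto simp: quad_sides_def)
  next
    case c2
    have "pbp S {(0, d), (d, 1), (b, 0)}"
    proof (rule core_ccw[OF sc0 _ _ _ oq0])
      show "(d - 0) \<bullet> (b - 0) = 0" using rA[OF c2(1)] by (simp add: bb dd inner_complex_def mult.commute)
      show "(1 - d) \<bullet> (0 - d) > 0" using cD[OF c2(2)] by (simp add: dd inner_complex_def power2_eq_square algebra_simps)
      show "(1 - d) \<bullet> (1 - 0) > 0" using xs by (simp add: dd inner_complex_def)
    qed
    thus ?thesis by (rule fin) (auto simp: quad_sides_def)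
  next
    case c3
    have "pbp S {(b, 0), (0, d), (1, b)}"
    proof (rule core_ccw[OF sc3 _ _ _ oq3])
      show "(0 - b) \<bullet> (1 - b) = 0" using rB[OF c3(1)] by (simp add: bb inner_complex_def power2_eq_square algebra_simps)
      show "(d - 0) \<bullet> (b - 0) > 0" using cA[OF c3(2)] by (simp add: bb dd inner_complex_def mult.commute)
      show "(d - 0) \<bullet> (d - b) > 0" by (rule H3a[OF c3])
    qed
    thus ?thesis by (rule fin) (auto simp: quad_sides_def)
  next
    case c4
    have "pbp S {(b, 1), (1, d), (0, b)}"
    proof (rule core_cw[OF sc3 _ _ _ oq3])
      show "(1 - b) \<bullet> (0 - b) = 0" using rB[OF c4(1)] by (simp add: bb inner_complex_def power2_eq_square algebra_simps)
      show "(d - 1) \<bullet> (b - 1) > 0" using cC[OF c4(2)] by (simp add: bb dd inner_complex_def algebra_simps)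
      show "(d - 1) \<bullet> (d - b) > 0" by (rule H3b[OF c4])
    qed
    thus ?thesis by (rule fin) (auto simp: quad_sides_def)
  next
    case c5
    have "pbp S {(1, b), (b, 0), (d, 1)}"
    proof (rule core_ccw[OF sc2 _ _ _ oq2])
      show "(b - 1) \<bullet> (d - 1) = 0" using rC[OF c5(1)] by (simp add: bb dd inner_complex_def algebra_simps)
      show "(0 - b) \<bullet> (1 - b) > 0" using cB[OF c5(2)] by (simp add: bb inner_complex_def power2_eq_square algebra_simps)
      show "(0 - b) \<bullet> (0 - 1) > 0" using xs by (simp add: bb inner_complex_def)
    qed
    thus ?thesis by (rule fin) (auto simp: quad_sides_def)
  next
    case c6
    have "pbp S {(1, d), (d, 0), (b, 1)}"
    proof (rule core_cw[OF sc2 _ _ _ oq2])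
      show "(d - 1) \<bullet> (b - 1) = 0" using rC[OF c6(1)] by (simp add: bb dd inner_complex_def algebra_simps)
      show "(0 - d) \<bullet> (1 - d) > 0" using cD[OF c6(2)] by (simp add: dd inner_complex_def power2_eq_square algebra_simps)
      show "(0 - d) \<bullet> (0 - 1) > 0" using xs by (simp add: dd inner_complex_def)
    qed
    thus ?thesis by (rule fin) (auto simp: quad_sides_def)
  next
    case c7
    have "pbp S {(d, 1), (1, b), (0, d)}"
    proof (rule core_ccw[OF sc1 _ _ _ oq1])
      show "(1 - d) \<bullet> (0 - d) = 0" using rD[OF c7(1)] by (simp add: dd inner_complex_def power2_eq_square algebra_simps)
      show "(b - 1) \<bullet> (d - 1) > 0" using cC[OF c7(2)] by (simp add: bb dd inner_complex_def algebra_simps)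
      show "(b - 1) \<bullet> (b - d) > 0" by (rule H3d[OF c7])
    qed
    thus ?thesis by (rule fin) (auto simp: quad_sides_def)
  next
    case c8
    have "pbp S {(d, 0), (0, b), (1, d)}"
    proof (rule core_cw[OF sc1 _ _ _ oq1])
      show "(0 - d) \<bullet> (1 - d) = 0" using rD[OF c8(1)] by (simp add: dd inner_complex_def power2_eq_square algebra_simps)
      show "(b - 0) \<bullet> (d - 0) > 0" using cA[OF c8(2)] by (simp add: bb dd inner_complex_def mult.commute)
      show "(b - 0) \<bullet> (b - d) > 0" by (rule H3c[OF c8])
    qed
    thus ?thesis by (rule fin) (auto simp: quad_sides_def)
  qed
qed



lemma vang_mult: "k \<noteq> 0 \<Longrightarrow> vang (k * u) (k * v) = vang u v"
proof -
  assume k: "k \<noteq> 0"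
  have i: "(k * u) \<bullet> (k * v) = (cmod k)\<^sup>2 * (u \<bullet> v)"
    by (simp only: cmod_power2) (simp add: inner_complex_def algebra_simps power2_eq_square)
  have n: "norm (k * u) * norm (k * v) = (cmod k)\<^sup>2 * (norm u * norm v)"
    by (simp add: norm_mult power2_eq_square)
  have "(cmod k)\<^sup>2 \<noteq> 0" using k by simp
  then show ?thesis unfolding vang_def i n by simp
qed

lemma vang_cnj: "vang (cnj u) (cnj v) = vang u v"
  by (simp add: vang_def inner_complex_def)

lemma diff_aff: "((c::complex) + k * p) - (c + k * q) = k * (p - q)"
  by (simp add: algebra_simps)

lemma params_aff: "k \<noteq> 0 \<Longrightarrow>
  quad_params (c + k * a1) (c + k * a2) (c + k * a3) (c + k * a4) = quad_params a1 a2 a3 a4"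
  unfolding quad_params_def diff_aff by (simp add: vang_mult)

lemma angles_aff: "k \<noteq> 0 \<Longrightarrow>
  interior_angles (c + k * a1) (c + k * a2) (c + k * a3) (c + k * a4) = interior_angles a1 a2 a3 a4"
  unfolding interior_angles_def diff_aff by (simp add: vang_mult)

lemma cross_mult: "cross (k * u) (k * v) = (cmod k)\<^sup>2 * cross u v"
  by (simp only: cmod_power2) (simp add: cross_def algebra_simps power2_eq_square)

lemma quadr_aff: "k \<noteq> 0 \<Longrightarrow>
  quadrilateral (c + k * a1) (c + k * a2) (c + k * a3) (c + k * a4) = quadrilateral a1 a2 a3 a4"
proof -
  assume k: "k \<noteq> 0"
  have p: "(cmod k)\<^sup>2 * (cmod k)\<^sup>2 > 0" using k by simp
  show ?thesis unfolding quadrilateral_def diff_aff cross_mult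
    using p by (simp add: mult_less_0_iff zero_less_mult_iff mult.assoc mult.left_commute[of "(cmod k)\<^sup>2"])
qed

lemma region_aff:
  "quad_region (c + k * a1) (c + k * a2) (c + k * a3) (c + k * a4) = (\<lambda>z. c + k * z) ` quad_region a1 a2 a3 a4"
proof -
  have h: "convex hull ((\<lambda>z. c + k * z) ` T) = (\<lambda>z. c + k * z) ` (convex hull T)" for T
  proof -
    have "(\<lambda>z. c + k * z) ` T = (\<lambda>x. c + x) ` ((\<lambda>z. k * z) ` T)" by (simp add: image_image)
    hence "convex hull ((\<lambda>z. c + k * z) ` T) = (\<lambda>x. c + x) ` ((\<lambda>z. k * z) ` (convex hull T))"
      by (simp add: convex_hull_translation convex_hull_linear_image bounded_linear.linear[OF bounded_linear_mult_right])
    thus ?thesis by (simp add: image_image)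
  qed
  show ?thesis unfolding quad_region_def image_Un h[symmetric] by simp
qed

lemma sides_aff:
  "quad_sides (c + k * a1) (c + k * a2) (c + k * a3) (c + k * a4) = (\<lambda>(a,b). (c + k * a, c + k * b)) ` quad_sides a1 a2 a3 a4"
  by (simp add: quad_sides_def)

lemma params_cnj: "quad_params (cnj a1) (cnj a2) (cnj a3) (cnj a4) = quad_params a1 a2 a3 a4"
  unfolding quad_params_def complex_cnj_diff[symmetric] vang_cnj ..

lemma angles_cnj: "interior_angles (cnj a1) (cnj a2) (cnj a3) (cnj a4) = interior_angles a1 a2 a3 a4"
  unfolding interior_angles_def complex_cnj_diff[symmetric] vang_cnj ..

lemma region_cnj: "quad_region (cnj a1) (cnj a2) (cnj a3) (cnj a4) = cnj ` quad_region a1 a2 a3 a4"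
proof -
  have h: "convex hull (cnj ` T) = cnj ` (convex hull T)" for T
    by (simp add: convex_hull_linear_image bounded_linear.linear[OF bounded_linear_cnj])
  show ?thesis unfolding quad_region_def image_Un h[symmetric] by simp
qed

lemma sides_cnj: "quad_sides (cnj a1) (cnj a2) (cnj a3) (cnj a4) = (\<lambda>(a,b). (cnj a, cnj b)) ` quad_sides a1 a2 a3 a4"
  by (simp add: quad_sides_def)

lemma norm_all:
  fixes b d :: complex
  assumes q: "quadrilateral 0 b 1 d" and ns: "near_square (pi / 12) 0 b 1 d" and ra: "right_adj_acute 0 b 1 d"
  shows "has_periodic_billiard_path 0 b 1 d"
proof -
  have "Im b * Im d < 0" using q by (simp add: quadrilateral_def cross_def)
  then consider "Im b > 0" "Im d < 0" | "Im b < 0" "Im d > 0"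
    by (auto simp: mult_less_0_iff)
  then show ?thesis
  proof cases
    case 1
    then show ?thesis using normalized ns ra by blast
  next
    case 2
    have ns': "near_square (pi / 12) 0 (cnj b) 1 (cnj d)"
      using ns params_cnj[of 0 b 1 d] by (simp add: near_square_def)
    have ra': "right_adj_acute 0 (cnj b) 1 (cnj d)"
      using ra angles_cnj[of 0 b 1 d] by (simp add: right_adj_acute_def)
    have "has_periodic_billiard_path 0 (cnj b) 1 (cnj d)"
      using normalized[OF _ _ ns' ra'] 2 by simp
    hence "pbp (quad_region 0 (cnj b) 1 (cnj d)) (quad_sides 0 (cnj b) 1 (cnj d))" by (simp add: has_pbp_eq)
    hence "pbp (quad_region (cnj 0) (cnj b) (cnj 1) (cnj d)) (quad_sides (cnj 0) (cnj b) (cnj 1) (cnj d))" by simp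
    hence "pbp (cnj ` quad_region 0 b 1 d) ((\<lambda>(a,b). (cnj a, cnj b)) ` quad_sides 0 b 1 d)"
      unfolding region_cnj sides_cnj .
    hence "pbp (cnj ` cnj ` quad_region 0 b 1 d) ((\<lambda>(a,b). (cnj a, cnj b)) ` (\<lambda>(a,b). (cnj a, cnj b)) ` quad_sides 0 b 1 d)"
      by (rule pbp_cnj)
    moreover have "(\<lambda>(a,b). (cnj a, cnj b)) ` (\<lambda>(a,b). (cnj a, cnj b)) ` Q = Q" for Q :: "(complex \<times> complex) set"
      by (force simp: image_image case_prod_beta)
    ultimately show ?thesis by (simp add: has_pbp_eq image_image)
  qed
qed

theorem proposition3p3p1:
  fixes A B C D :: complex
  assumes "quadrilateral A B C D"
    and "near_square (pi / 12) A B C D"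
    and "right_adj_acute A B C D"
  shows "has_periodic_billiard_path A B C D"
proof -
  define k where "k = C - A"
  have k0: "k \<noteq> 0" using assms(1) by (auto simp: quadrilateral_def cross_def k_def)
  define b where "b = (B - A) / k"
  define d where "d = (D - A) / k"
  have eA: "A + k * 0 = A" and eB: "A + k * b = B" and eC: "A + k * 1 = C" and eD: "A + k * d = D"
    using k0 by (simp_all add: b_def d_def k_def)
  have q: "quadrilateral 0 b 1 d" using assms(1) quadr_aff[OF k0, of A 0 b 1 d] unfolding eA eB eC eD by simp
  have ns: "near_square (pi / 12) 0 b 1 d"
    using assms(2) params_aff[OF k0, of A 0 b 1 d] unfolding eA eB eC eD by (simp add: near_square_def)
  have ra: "right_adj_acute 0 b 1 d"
    using assms(3) angles_aff[OF k0, of A 0 b 1 d] unfolding eA eB eC eD by (simp add: right_adj_acute_def)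
  have "pbp (quad_region 0 b 1 d) (quad_sides 0 b 1 d)" using norm_all[OF q ns ra] by (simp add: has_pbp_eq)
  hence "pbp ((\<lambda>z. A + k * z) ` quad_region 0 b 1 d) ((\<lambda>(a,c). (A + k * a, A + k * c)) ` quad_sides 0 b 1 d)"
    by (rule pbp_affine[OF k0])
  hence "pbp (quad_region (A + k * 0) (A + k * b) (A + k * 1) (A + k * d))
             (quad_sides (A + k * 0) (A + k * b) (A + k * 1) (A + k * d))"
    unfolding region_aff sides_aff .
  thus ?thesis unfolding eA eB eC eD has_pbp_eq .
qed


end
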